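(* Let $n\geq 4$ and let $\delta: VT_n\to\mathrm{GL}_{n+1}(\mathbb{C})$ be a homogeneous $3$-local representation of $VT_n$, equivalent to one of the representations $\delta_j$, $1\le j\le 14$, described below. Then: (1) if $\delta$ is equivalent to $\delta_1$ with $e=1$, then $\delta$ is unfaithful; (2) if $\delta$ is equivalent to $\delta_2$ with $e=1$, then $\delta$ is unfaithful; (3) if $\delta$ is equivalent to $\delta_3$ with $d=\frac1p$, then $\delta$ is unfaithful; (4) if $\delta$ is equivalent to $\delta_4$ with $h=\frac1k$, then $\delta$ is unfaithful; (5) if $\delta$ is equivalent to $\delta_j$ for some $5\le j\le 14$, then $\delta$ is unfaithful.
   Context: The virtual twin group $VT_n$ has generators $s_1,\dots,s_{n-1},\rho_1,\dots,\rho_{n-1}$ and defining relations: $s_i^2=1$; $s_is_j=s_js_i$ ($|i-j|\ge2$); $\rho_i\rho_{i+1}\rho_i=\rho_{i+1}\rho_i\rho_{i+1}$ ($1\le i\le n-2$); $\rho_i\rho_j=\rho_j\rho_i$ ($|i-j|\ge2$); $\rho_i^2=1$; $s_i\rho_j=\rho_js_i$ ($|i-j|\ge2$); $\rho_i\rho_{i+1}s_i=s_{i+1}\rho_i\rho_{i+1}$ ($1\le i\le n-2$). A homogeneous $3$-local representation $\delta:VT_n\to\mathrm{GL}_{n+1}(\mathbb{C})$ is one with $\delta(s_i)=\mathrm{diag}(I_{i-1},M,I_{n-i-1})$, $\delta(\rho_i)=\mathrm{diag}(I_{i-1},N,I_{n-i-1})$ for fixed $M,N\in\mathrm{GL}_3(\mathbb{C})$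 (block-diagonal; $I_r$ the $r\times r$ identity). Equivalent means conjugate by an invertible matrix; unfaithful means not injective. The representation $\delta_j$ is the homogeneous $3$-local representation with $(M,N)=(M_j,N_j)$, where ($\mathbb{C}^*=\mathbb{C}\setminus\{0\}$): $M_1=\begin{pmatrix}1&0&0\\0&e&\frac{1-e^2}{h}\\0&h&-e\end{pmatrix}$, $N_1=\begin{pmatrix}1&0&0\\0&0&p\\0&\frac1p&0\end{pmatrix}$ ($e\in\mathbb{C}$, $h,p\in\mathbb{C}^*$); $M_2=\begin{pmatrix}-e&\frac{1-e^2}{d}&0\\d&e&0\\0&0&1\end{pmatrix}$, $N_2=\begin{pmatrix}0&k&0\\\frac1k&0&0\\0&0&1\end{pmatrix}$ ($e\in\mathbb{C}$, $d,k\in\mathbb{C}^*$); $M_3=\begin{pmatrix}1&0&0\\d&-1&2p-dp^2\\0&0&1\end{pmatrix}$, $N_3=\begin{pmatrix}1&0&0\\\frac1p&-1&p\\0&0&1\end{pmatrix}$ ($d\in\mathbb{C}$, $p\in\mathbb{C}^*$); $M_4=\begin{pmatrix}1&2k-hk^2&0\\0&-1&0\\0&h&1\end{pmatrix}$, $N_4=\begin{pmatrix}1&k&0\\0&-1&0\\0&\frac1k&1\end{pmatrix}$ ($h\in\mathbb{C}$, $k\in\mathbb{C}^*$); $M_5=\begin{pmatrix}1&b&0\\0&-1&0\\0&0&1\end{pmatrix}$, $N_5=N_2$ ($b\in\mathbb{C}$, $k\in\mathbb{C}^*$); $M_6=\begin{pmatrix}-1&b&0\\0&1&0\\0&0&1\end{pmatrix}$,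 $N_6=N_2$ ($b\in\mathbb{C}$, $k\in\mathbb{C}^*$); $M_7=I_3$, $N_7=\begin{pmatrix}1&0&0\\\frac1p&-1&p\\0&0&1\end{pmatrix}$ ($p\in\mathbb{C}^*$); $M_8=I_3$, $N_8=\begin{pmatrix}1&k&0\\0&-1&0\\0&\frac1k&1\end{pmatrix}$ ($k\in\mathbb{C}^*$); $M_9=\mathrm{diag}(1,-1,-1)$, $N_9=\begin{pmatrix}1&0&0\\0&0&p\\0&\frac1p&0\end{pmatrix}$ ($p\in\mathbb{C}^*$); $M_{10}=\mathrm{diag}(1,-1,1)$, $N_{10}=N_9$; $M_{11}=I_3$, $N_{11}=N_9$ ($p\in\mathbb{C}^*$); $M_{12}=\mathrm{diag}(-1,-1,1)$, $N_{12}=\begin{pmatrix}0&k&0\\\frac1k&0&0\\0&0&1\end{pmatrix}$; $M_{13}=I_3$, $N_{13}=N_{12}$ ($k\in\mathbb{C}^*$); $M_{14}=N_{14}=I_3$. *)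

theory Defs
  imports Complex_Main "Jordan_Normal_Form.Matrix"
begin

(* Generators of the virtual twin group VT_n: S i = s_i, R i = rho_i (1 <= i <= n-1). *)
datatype vt_gen = S nat | R nat

(* A word is a list of generators; all generators of VT_n are involutions
   (s_i^2 = rho_i^2 = 1), so every group element is a positive word. *)
definition vt_word :: "nat \<Rightarrow> vt_gen list \<Rightarrow> bool" where
  "vt_word n w \<longleftrightarrow> (\<forall>g \<in> set w. case g of S i \<Rightarrow> 1 \<le> i \<and> i \<le> n - 1
                                         | R i \<Rightarrow> 1 \<le> i \<and> i \<le> n - 1)"

definition vt_rels :: "nat \<Rightarrow> (vt_gen list \<times> vt_gen list) set" where
  "vt_rels n =
     {([S i, S i], []) | i. 1 \<le> i \<and> i \<le> n - 1}
   \<union> {([S i, S j], [S j, S i]) | i j. 1 \<le> i \<and> i \<le> n - 1 \<and> 1 \<le> j \<and> j \<le> n - 1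
                                    \<and> (i + 2 \<le> j \<or> j + 2 \<le> i)}
   \<union> {([R i, R (i+1), R i], [R (i+1), R i, R (i+1)]) | i. 1 \<le> i \<and> i \<le> n - 2}
   \<union> {([R i, R j], [R j, R i]) | i j. 1 \<le> i \<and> i \<le> n - 1 \<and> 1 \<le> j \<and> j \<le> n - 1
                                    \<and> (i + 2 \<le> j \<or> j + 2 \<le> i)}
   \<union> {([R i, R i], []) | i. 1 \<le> i \<and> i \<le> n - 1}
   \<union> {([S i, R j], [R j, S i]) | i j. 1 \<le> i \<and> i \<le> n - 1 \<and> 1 \<le> j \<and> j \<le> n - 1
                                    \<and> (i + 2 \<le> j \<or> j + 2 \<le> i)}
   \<union> {([R i, R (i+1), S i], [S (i+1), R i, R (i+1)]) | i. 1 \<le> i \<and> i \<le> n - 2}"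

inductive vt_eq :: "nat \<Rightarrow> vt_gen list \<Rightarrow> vt_gen list \<Rightarrow> bool" for n where
  vt_refl: "vt_eq n w w"
| vt_sym: "vt_eq n u v \<Longrightarrow> vt_eq n v u"
| vt_trans: "vt_eq n u v \<Longrightarrow> vt_eq n v w \<Longrightarrow> vt_eq n u w"
| vt_rel: "(l, r) \<in> vt_rels n \<Longrightarrow> vt_word n u \<Longrightarrow> vt_word n v
            \<Longrightarrow> vt_eq n (u @ l @ v) (u @ r @ v)"

(* diag(I_{i-1}, A, I_{n-i-1}) as an (n+1)x(n+1) matrix, A a 3x3 matrix. *)
definition local_mat :: "nat \<Rightarrow> nat \<Rightarrow> complex mat \<Rightarrow> complex mat" where
  "local_mat n i A = mat (n+1) (n+1) (\<lambda>(r, c).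
      if i - 1 \<le> r \<and> r \<le> i + 1 \<and> i - 1 \<le> c \<and> c \<le> i + 1
      then A $$ (r + 1 - i, c + 1 - i)
      else if r = c then 1 else 0)"

fun gen_mat :: "nat \<Rightarrow> complex mat \<Rightarrow> complex mat \<Rightarrow> vt_gen \<Rightarrow> complex mat" where
  "gen_mat n M N (S i) = local_mat n i M"
| "gen_mat n M N (R i) = local_mat n i N"

definition word_mat :: "nat \<Rightarrow> complex mat \<Rightarrow> complex mat \<Rightarrow> vt_gen list \<Rightarrow> complex mat" where
  "word_mat n M N w = foldr (\<lambda>g A. gen_mat n M N g * A) w (1\<^sub>m (n+1))"

definition hom3_rep :: "nat \<Rightarrow> complex mat \<Rightarrow> complex mat \<Rightarrow> bool" where
  "hom3_rep n M N \<longleftrightarrow> M \<in> carrier_mat 3 3 \<and> N \<in> carrier_mat 3 3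
     \<and> invertible_mat M \<and> invertible_mat N
     \<and> (\<forall>(l, r) \<in> vt_rels n. word_mat n M N l = word_mat n M N r)"

definition rep_equiv :: "nat \<Rightarrow> complex mat \<Rightarrow> complex mat \<Rightarrow> complex mat \<Rightarrow> complex mat \<Rightarrow> bool" where
  "rep_equiv n M N M' N' \<longleftrightarrow> (\<exists>P. P \<in> carrier_mat (n+1) (n+1) \<and> invertible_mat P \<and>
     (\<forall>g. vt_word n [g] \<longrightarrow> gen_mat n M N g * P = P * gen_mat n M' N' g))"

definition unfaithful :: "nat \<Rightarrow> complex mat \<Rightarrow> complex mat \<Rightarrow> bool" where
  "unfaithful n M N \<longleftrightarrow> (\<exists>u v. vt_word n u \<and> vt_word n v \<and> \<not> vt_eq n u v
                                \<and> word_mat n M N u = word_mat n M N v)"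

definition mat3 :: "complex list list \<Rightarrow> complex mat" where
  "mat3 xs = mat_of_rows_list 3 xs"

definition M1 :: "complex \<Rightarrow> complex \<Rightarrow> complex mat" where
  "M1 e h = mat3 [[1,0,0],[0,e,(1 - e^2)/h],[0,h,-e]]"
definition N1 :: "complex \<Rightarrow> complex mat" where
  "N1 p = mat3 [[1,0,0],[0,0,p],[0,1/p,0]]"
definition M2 :: "complex \<Rightarrow> complex \<Rightarrow> complex mat" where
  "M2 e d = mat3 [[-e,(1 - e^2)/d,0],[d,e,0],[0,0,1]]"
definition N2 :: "complex \<Rightarrow> complex mat" where
  "N2 k = mat3 [[0,k,0],[1/k,0,0],[0,0,1]]"
definition M3 :: "complex \<Rightarrow> complex \<Rightarrow> complex mat" where
  "M3 d p = mat3 [[1,0,0],[d,-1,2*p - d*p^2],[0,0,1]]"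
definition N3 :: "complex \<Rightarrow> complex mat" where
  "N3 p = mat3 [[1,0,0],[1/p,-1,p],[0,0,1]]"
definition M4 :: "complex \<Rightarrow> complex \<Rightarrow> complex mat" where
  "M4 h k = mat3 [[1,2*k - h*k^2,0],[0,-1,0],[0,h,1]]"
definition N4 :: "complex \<Rightarrow> complex mat" where
  "N4 k = mat3 [[1,k,0],[0,-1,0],[0,1/k,1]]"
definition M5 :: "complex \<Rightarrow> complex mat" where
  "M5 b = mat3 [[1,b,0],[0,-1,0],[0,0,1]]"
definition M6 :: "complex \<Rightarrow> complex mat" where
  "M6 b = mat3 [[-1,b,0],[0,1,0],[0,0,1]]"
definition I3 :: "complex mat" where
  "I3 = mat3 [[1,0,0],[0,1,0],[0,0,1]]"
definition M9 :: "complex mat" where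
  "M9 = mat3 [[1,0,0],[0,-1,0],[0,0,-1]]"
definition M10 :: "complex mat" where
  "M10 = mat3 [[1,0,0],[0,-1,0],[0,0,1]]"
definition M12 :: "complex mat" where
  "M12 = mat3 [[-1,0,0],[0,-1,0],[0,0,1]]"

definition delta_5_14 :: "nat \<Rightarrow> complex mat \<Rightarrow> complex mat \<Rightarrow> bool" where
  "delta_5_14 n M N \<longleftrightarrow>
       (\<exists>b k. k \<noteq> 0 \<and> rep_equiv n M N (M5 b) (N2 k))
     \<or> (\<exists>b k. k \<noteq> 0 \<and> rep_equiv n M N (M6 b) (N2 k))
     \<or> (\<exists>p. p \<noteq> 0 \<and> rep_equiv n M N I3 (N3 p))
     \<or> (\<exists>k. k \<noteq> 0 \<and> rep_equiv n M N I3 (N4 k))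
     \<or> (\<exists>p. p \<noteq> 0 \<and> rep_equiv n M N M9 (N1 p))
     \<or> (\<exists>p. p \<noteq> 0 \<and> rep_equiv n M N M10 (N1 p))
     \<or> (\<exists>p. p \<noteq> 0 \<and> rep_equiv n M N I3 (N1 p))
     \<or> (\<exists>k. k \<noteq> 0 \<and> rep_equiv n M N M12 (N2 k))
     \<or> (\<exists>k. k \<noteq> 0 \<and> rep_equiv n M N I3 (N2 k))
     \<or> rep_equiv n M N I3 I3"

end

theory Submission
  imports Defs
begin

fun gidx :: "vt_gen \<Rightarrow> nat" where
  "gidx (S i) = i" | "gidx (R i) = i"

fun isS :: "vt_gen \<Rightarrow> bool" where
  "isS (S i) = True" | "isS (R i) = False"

definition tr :: "nat \<Rightarrow> nat \<Rightarrow> nat" where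
  "tr i x = (if x = i then i + 1 else if x = i + 1 then i else x)"

fun perm_of :: "vt_gen list \<Rightarrow> nat \<Rightarrow> nat" where
  "perm_of [] = id"
| "perm_of (g # w) = tr (gidx g) \<circ> perm_of w"

lemma perm_of_append: "perm_of (u @ v) = perm_of u \<circ> perm_of v"
  by (induction u) auto

definition scnt :: "vt_gen list \<Rightarrow> nat" where
  "scnt w = length (filter isS w)"

lemma tr_tr: "tr i \<circ> tr i = id"
  by (auto simp: fun_eq_iff tr_def)

lemma tr_comm: "i + 2 \<le> j \<or> j + 2 \<le> i \<Longrightarrow> tr i \<circ> tr j = tr j \<circ> tr i"
  by (auto simp: fun_eq_iff tr_def)

lemma tr_braid: "tr i \<circ> tr (i+1) \<circ> tr i = tr (i+1) \<circ> tr i \<circ> tr (i+1)"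
  by (auto simp: fun_eq_iff tr_def)

lemma rels_perm: "(l, r) \<in> vt_rels n \<Longrightarrow> perm_of l = perm_of r"
  unfolding vt_rels_def
  using tr_tr tr_comm tr_braid
  by (auto simp: comp_assoc)

lemma rels_scnt: "(l, r) \<in> vt_rels n \<Longrightarrow> even (scnt l) = even (scnt r)"
  unfolding vt_rels_def scnt_def by auto

lemma vt_eq_perm: "vt_eq n u v \<Longrightarrow> perm_of u = perm_of v"
  by (induction rule: vt_eq.induct) (auto simp: perm_of_append rels_perm)

lemma vt_eq_scnt: "vt_eq n u v \<Longrightarrow> even (scnt u) = even (scnt v)"
  by (induction rule: vt_eq.induct) (auto simp: scnt_def dest!: rels_scnt)


definition ext :: "nat \<Rightarrow> nat \<Rightarrow> complex mat \<Rightarrow> complex mat" where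
  "ext m n B = mat (n+1) (n+1) (\<lambda>(r,c). if r < m \<and> c < m then B $$ (r,c) else if r = c then 1 else 0)"

lemma ext_carrier[simp]: "ext m n B \<in> carrier_mat (n+1) (n+1)"
  by (simp add: ext_def)

lemma ext_mult:
  assumes B: "B \<in> carrier_mat m m" and C: "C \<in> carrier_mat m m" and mn: "m \<le> n + 1"
  shows "ext m n B * ext m n C = ext m n (B * C)"
proof (rule eq_matI)
  fix r c assume r: "r < dim_row (ext m n (B * C))" and c: "c < dim_col (ext m n (B * C))"
  then have r': "r < n+1" and c': "c < n+1" by (auto simp: ext_def)
  have L: "(ext m n B * ext m n C) $$ (r,c) = (\<Sum>k<n+1. ext m n B $$ (r,k) * ext m n C $$ (k,c))"
    using r' c' by (simp add: scalar_prod_def ext_def lessThan_atLeast0)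
  also have "\<dots> = (\<Sum>k<m. ext m n B $$ (r,k) * ext m n C $$ (k,c)) + (\<Sum>k\<in>{m..<n+1}. ext m n B $$ (r,k) * ext m n C $$ (k,c))"
  proof -
    have e: "{..<n+1} = {..<m} \<union> {m..<n+1}" using mn by auto
    show ?thesis unfolding e by (rule sum.union_disjoint) auto
  qed
  finally have L: "(ext m n B * ext m n C) $$ (r,c) = (\<Sum>k<m. ext m n B $$ (r,k) * ext m n C $$ (k,c)) + (\<Sum>k\<in>{m..<n+1}. ext m n B $$ (r,k) * ext m n C $$ (k,c))" .
  show "(ext m n B * ext m n C) $$ (r,c) = ext m n (B * C) $$ (r,c)"
  proof (cases "r < m")
    case True
    have z: "(\<Sum>k\<in>{m..<n+1}. ext m n B $$ (r,k) * ext m n C $$ (k,c)) = 0"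
      by (rule sum.neutral) (use True in \<open>auto simp: ext_def\<close>)
    show ?thesis
    proof (cases "c < m")
      case True2: True
      have "(\<Sum>k<m. ext m n B $$ (r,k) * ext m n C $$ (k,c)) = (\<Sum>k<m. B $$ (r,k) * C $$ (k,c))"
        by (rule sum.cong) (use True True2 mn in \<open>auto simp: ext_def\<close>)
      then show ?thesis using L z True True2 B C r' c'
        by (simp add: ext_def scalar_prod_def lessThan_atLeast0)
    next
      case False
      have "(\<Sum>k<m. ext m n B $$ (r,k) * ext m n C $$ (k,c)) = 0"
        by (rule sum.neutral) (use False mn c' in \<open>auto simp: ext_def\<close>)
      then show ?thesis using L z True False r' c' by (simp add: ext_def)
    qed
  next
    case False
    have z: "(\<Sum>k<m. ext m n B $$ (r,k) * ext m n C $$ (k,c)) = 0"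
      by (rule sum.neutral) (use False mn r' in \<open>auto simp: ext_def\<close>)
    have "(\<Sum>k\<in>{m..<n+1}. ext m n B $$ (r,k) * ext m n C $$ (k,c)) = ext m n C $$ (r,c)"
    proof -
      have "(\<Sum>k\<in>{m..<n+1}. ext m n B $$ (r,k) * ext m n C $$ (k,c)) = (\<Sum>k\<in>{m..<n+1}. if k = r then ext m n C $$ (k,c) else 0)"
        by (rule sum.cong) (use False r' in \<open>auto simp: ext_def\<close>)
      also have "\<dots> = ext m n C $$ (r,c)" using False r' by simp
      finally show ?thesis .
    qed
    then show ?thesis using L z False r' c' by (simp add: ext_def)
  qed
qed (auto simp: ext_def)


lemma mult4: "mat_of_rows_list 4 [[a00,a01,a02,a03],[a10,a11,a12,a13],[a20,a21,a22,a23],[a30,a31,a32,a33]] * mat_of_rows_list 4 [[b00,b01,b02,b03],[b10,b11,b12,b13],[b20,b21,b22,b23],[b30,b31,b32,b33]] = (mat_of_rows_list 4 [[a00*b00+a01*b10+a02*b20+a03*b30,a00*b01+a01*b11+a02*b21+a03*b31,a00*b02+a01*b12+a02*b22+a03*b32,a00*b03+a01*b13+a02*b23+a03*b33],[a10*b00+a11*b10+a12*b20+a13*b30,a10*b01+a11*b11+a12*b21+a13*b31,a10*b02+a11*b12+a12*b22+a13*b32,a10*b03+a11*b13+a12*b23+a13*b33],[a20*b00+a21*b10+a22*b20+a23*b30,a20*b01+a21*b11+a22*b21+a23*b31,a20*b02+a21*b12+a22*b22+a23*b32,a20*b03+a21*b13+a22*b23+a23*b33],[a30*b00+a31*b10+a32*b20+a33*b30,a30*b01+a31*b11+a32*b21+a33*b31,a30*b02+a31*b12+a32*b22+a33*b32,a30*b03+a31*b13+a32*b23+a33*b33]]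 :: complex mat)"
  by (rule eq_matI) (auto simp: mat_of_rows_list_def scalar_prod_def less_Suc_eq numeral_eq_Suc)

lemma loc1: "local_mat 3 (Suc 0) (mat3 [[a,b,c],[d,e,f],[g,h,k]]) = mat_of_rows_list 4 [[a,b,c,0],[d,e,f,0],[g,h,k,0],[0,0,0,1]]"
  by (rule eq_matI) (auto simp: local_mat_def mat3_def mat_of_rows_list_def less_Suc_eq numeral_eq_Suc)

lemma loc2: "local_mat 3 2 (mat3 [[a,b,c],[d,e,f],[g,h,k]]) = mat_of_rows_list 4 [[1,0,0,0],[0,a,b,c],[0,d,e,f],[0,g,h,k]]"
  by (rule eq_matI) (auto simp: local_mat_def mat3_def mat_of_rows_list_def less_Suc_eq numeral_eq_Suc)

lemma one4: "(1\<^sub>m 4 :: complex mat) = mat_of_rows_list 4 [[1,0,0,0],[0,1,0,0],[0,0,1,0],[0,0,0,1]]"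
  by (rule eq_matI) (auto simp: mat_of_rows_list_def less_Suc_eq numeral_eq_Suc)

lemma test1: "p \<noteq> 0 \<Longrightarrow> h \<noteq> 0 \<Longrightarrow> word_mat 3 (M1 1 h) (N1 p) [S 2, R 1, S 1, R 1] = word_mat 3 (M1 1 h) (N1 p) [R 1, S 1, R 1, S 2]"
  unfolding word_mat_def M1_def N1_def
  by (simp add: loc1 loc2 one4 mult4 field_simps)


lemma local_ext: "1 \<le> i \<Longrightarrow> i \<le> 2 \<Longrightarrow> 3 \<le> n \<Longrightarrow> local_mat n i A = ext 4 n (local_mat 3 i A)"
  by (rule eq_matI) (auto simp: local_mat_def ext_def)

lemma one_ext: "3 \<le> n \<Longrightarrow> 1\<^sub>m (Suc n) = ext 4 n (1\<^sub>m 4)"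
proof (rule eq_matI)
  fix i j assume "i < dim_row (ext 4 n (1\<^sub>m 4))" "j < dim_col (ext 4 n (1\<^sub>m 4))"
  then have "i < n+1" "j < n+1" by (auto simp: ext_def)
  then show "1\<^sub>m (Suc n) $$ (i,j) = ext 4 n (1\<^sub>m 4) $$ (i,j)" by (simp add: ext_def)
qed (auto simp: ext_def)

lemma gen_carrier[simp]: "gen_mat n M N g \<in> carrier_mat (Suc n) (Suc n)"
  by (cases g) (auto simp: local_mat_def)

lemma word_carrier[simp]: "word_mat n M N w \<in> carrier_mat (Suc n) (Suc n)"
proof (induction w)
  case (Cons g w)
  then show ?case using mult_carrier_mat[OF gen_carrier[of n M N g] Cons.IH] by (simp add: word_mat_def)
qed (simp add: word_mat_def)

lemma word_Cons: "word_mat n M N (g # w) = gen_mat n M N g * word_mat n M N w"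
  by (simp add: word_mat_def)

lemma word_ext: "(\<forall>g\<in>set w. 1 \<le> gidx g \<and> gidx g \<le> 2) \<Longrightarrow> 3 \<le> n \<Longrightarrow> word_mat n M N w = ext 4 n (word_mat 3 M N w)"
proof (induction w)
  case Nil
  then show ?case by (simp add: word_mat_def one_ext)
next
  case (Cons g w)
  have c1: "gen_mat 3 M N g \<in> carrier_mat 4 4" using gen_carrier[of 3 M N g] by simp
  have c2: "word_mat 3 M N w \<in> carrier_mat 4 4" using word_carrier[of 3 M N w] by simp
  have "gen_mat n M N g = ext 4 n (gen_mat 3 M N g)"
    using Cons.prems by (cases g) (auto intro: local_ext)
  then show ?case using Cons ext_mult[OF c1 c2] by (simp add: word_Cons)
qed

lemma transfer:
  assumes P: "P \<in> carrier_mat (Suc n) (Suc n)"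
    and h: "\<forall>g. vt_word n [g] \<longrightarrow> gen_mat n M N g * P = P * gen_mat n M' N' g"
  shows "vt_word n w \<Longrightarrow> word_mat n M N w * P = P * word_mat n M' N' w"
proof (induction w)
  case Nil
  then show ?case using P by (simp add: word_mat_def)
next
  case (Cons g w)
  have g: "vt_word n [g]" and w: "vt_word n w" using Cons.prems by (auto simp: vt_word_def)
  have "word_mat n M N (g # w) * P = gen_mat n M N g * (word_mat n M N w * P)"
    using P assoc_mult_mat[of "gen_mat n M N g" "Suc n" "Suc n" "word_mat n M N w" "Suc n" P "Suc n"] by (simp add: word_Cons)
  also have "\<dots> = gen_mat n M N g * P * word_mat n M' N' w"
    using Cons.IH[OF w] assoc_mult_mat[of "gen_mat n M N g" "Suc n" "Suc n" P "Suc n" "word_mat n M' N' w" "Suc n"] P by simp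
  also have "\<dots> = P * gen_mat n M' N' g * word_mat n M' N' w"
    using h g by simp
  also have "\<dots> = P * word_mat n M' N' (g # w)"
    using P assoc_mult_mat[of P "Suc n" "Suc n" "gen_mat n M' N' g" "Suc n" "word_mat n M' N' w" "Suc n"] by (simp add: word_Cons)
  finally show ?case .
qed

lemma unf_from:
  assumes eq: "rep_equiv n M N M' N'" and u: "vt_word n u" and v: "vt_word n v"
    and ne: "\<not> vt_eq n u v" and W: "word_mat n M' N' u = word_mat n M' N' v"
  shows "unfaithful n M N"
proof -
  obtain P where P: "P \<in> carrier_mat (Suc n) (Suc n)" "invertible_mat P"
    and h: "\<forall>g. vt_word n [g] \<longrightarrow> gen_mat n M N g * P = P * gen_mat n M' N' g"
    using eq unfolding rep_equiv_def by auto
  obtain Q where Q: "P * Q = 1\<^sub>m (Suc n)" "Q * P = 1\<^sub>m (dim_row Q)"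
    using P unfolding invertible_mat_def inverts_mat_def by auto
  have Qc: "Q \<in> carrier_mat (Suc n) (Suc n)"
  proof -
    have "dim_col Q = Suc n" using Q(1) P by (metis index_mult_mat(3) index_one_mat(3))
    moreover have "dim_row Q = Suc n" using Q(2) P by (metis carrier_matD(2) index_mult_mat(3) index_one_mat(3))
    ultimately show ?thesis by auto
  qed
  have XP: "word_mat n M N u * P = word_mat n M N v * P"
    using transfer[OF P(1) h u] transfer[OF P(1) h v] W by simp
  have "word_mat n M N u = word_mat n M N u * (P * Q)" using Q(1) right_mult_one_mat[OF word_carrier] by simp
  also have "\<dots> = (word_mat n M N u * P) * Q" using assoc_mult_mat[OF word_carrier P(1) Qc] by simp
  also have "\<dots> = (word_mat n M N v * P) * Q" using XP by simp
  also have "\<dots> = word_mat n M N v * (P * Q)" using assoc_mult_mat[OF word_carrier P(1) Qc] by simp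
  also have "\<dots> = word_mat n M N v" using Q(1) right_mult_one_mat[OF word_carrier] by simp
  finally show ?thesis using u v ne unfolding unfaithful_def by blast
qed

definition good :: "(vt_gen list \<times> vt_gen list) set" where
  "good = {([S 1], []), ([S 1], [R 1]), ([S 1, S 2], [S 2, S 1]),
           ([S 2, R 1, S 1, R 1], [R 1, S 1, R 1, S 2]),
           ([S 2, R 1, S 2, R 1], [R 1, S 2, R 1, S 2])}"

lemma good_props:
  assumes "(u, v) \<in> good" "n \<ge> 4"
  shows "vt_word n u \<and> vt_word n v \<and> \<not> vt_eq n u v
       \<and> (\<forall>g\<in>set u. 1 \<le> gidx g \<and> gidx g \<le> 2) \<and> (\<forall>g\<in>set v. 1 \<le> gidx g \<and> gidx g \<le> 2)"
proof -
  have A: "\<not> vt_eq n u v" if "perm_of u 1 \<noteq> perm_of v 1" for u v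
    using that vt_eq_perm by metis
  have B: "\<not> vt_eq n u v" if "even (scnt u) \<noteq> even (scnt v)" for u v
    using that vt_eq_scnt by metis
  have "\<not> vt_eq n u v" using assms(1) unfolding good_def
  proof (elim insertE)
    assume "(u, v) = ([S 1], [])" then show ?thesis by (intro B) (auto simp: scnt_def)
  next
    assume "(u, v) = ([S 1], [R 1])" then show ?thesis by (intro B) (auto simp: scnt_def)
  next
    assume "(u, v) = ([S 1, S 2], [S 2, S 1])" then show ?thesis by (intro A) (auto simp: tr_def)
  next
    assume "(u, v) = ([S 2, R 1, S 1, R 1], [R 1, S 1, R 1, S 2])" then show ?thesis by (intro A) (auto simp: tr_def)
  next
    assume "(u, v) = ([S 2, R 1, S 2, R 1], [R 1, S 2, R 1, S 2])" then show ?thesis by (intro A) (auto simp: tr_def)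
  qed simp
  then show ?thesis using assms unfolding good_def by (auto simp: vt_word_def)
qed

lemma key:
  assumes "rep_equiv n M N M' N'" "n \<ge> 4" "(u, v) \<in> good"
    "word_mat 3 M' N' u = word_mat 3 M' N' v"
  shows "unfaithful n M N"
proof -
  have g: "vt_word n u" "vt_word n v" "\<not> vt_eq n u v"
    "\<forall>g\<in>set u. 1 \<le> gidx g \<and> gidx g \<le> 2" "\<forall>g\<in>set v. 1 \<le> gidx g \<and> gidx g \<le> 2"
    using good_props[OF assms(3,2)] by auto
  have "word_mat n M' N' u = word_mat n M' N' v"
    using word_ext[OF g(4), of n M' N'] word_ext[OF g(5), of n M' N'] assms(2,4) by simp
  then show ?thesis using unf_from[OF assms(1) g(1,2,3)] by simp
qed


abbreviation "wp2a \<equiv> [S 2, R 1, S 1, R 1]"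
abbreviation "wp2b \<equiv> [R 1, S 1, R 1, S 2]"
abbreviation "wp3a \<equiv> [S 2, R 1, S 2, R 1]"
abbreviation "wp3b \<equiv> [R 1, S 2, R 1, S 2]"

lemma c1: "p \<noteq> 0 \<Longrightarrow> h \<noteq> 0 \<Longrightarrow> word_mat 3 (M1 1 h) (N1 p) wp2a = word_mat 3 (M1 1 h) (N1 p) wp2b"
  unfolding word_mat_def M1_def N1_def by (simp add: loc1 loc2 one4 mult4 field_simps)
lemma c2: "d \<noteq> 0 \<Longrightarrow> k \<noteq> 0 \<Longrightarrow> word_mat 3 (M2 1 d) (N2 k) wp3a = word_mat 3 (M2 1 d) (N2 k) wp3b"
  unfolding word_mat_def M2_def N2_def by (simp add: loc1 loc2 one4 mult4 field_simps)
lemma c3: "p \<noteq> 0 \<Longrightarrow> word_mat 3 (M3 (1/p) p) (N3 p) [S 1] = word_mat 3 (M3 (1/p) p) (N3 p) [R 1]"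
  unfolding word_mat_def M3_def N3_def by (simp add: loc1 loc2 one4 mult4 field_simps power2_eq_square)
lemma c4: "k \<noteq> 0 \<Longrightarrow> word_mat 3 (M4 (1/k) k) (N4 k) [S 1] = word_mat 3 (M4 (1/k) k) (N4 k) [R 1]"
  unfolding word_mat_def M4_def N4_def by (simp add: loc1 loc2 one4 mult4 field_simps power2_eq_square)
lemma c5: "k \<noteq> 0 \<Longrightarrow> word_mat 3 (M5 b) (N2 k) wp2a = word_mat 3 (M5 b) (N2 k) wp2b"
  unfolding word_mat_def M5_def N2_def by (simp add: loc1 loc2 one4 mult4 field_simps)
lemma c6: "k \<noteq> 0 \<Longrightarrow> word_mat 3 (M6 b) (N2 k) wp3a = word_mat 3 (M6 b) (N2 k) wp3b"
  unfolding word_mat_def M6_def N2_def by (simp add: loc1 loc2 one4 mult4 field_simps)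
lemma cI: "word_mat 3 I3 N [S 1] = word_mat 3 I3 N []"
  unfolding word_mat_def I3_def by (simp add: loc1 loc2 one4 mult4)
lemma c9: "word_mat 3 M9 N [S 1, S 2] = word_mat 3 M9 N [S 2, S 1]"
  unfolding word_mat_def M9_def by (simp add: loc1 loc2 one4 mult4)
lemma c10: "word_mat 3 M10 N [S 1, S 2] = word_mat 3 M10 N [S 2, S 1]"
  unfolding word_mat_def M10_def by (simp add: loc1 loc2 one4 mult4)
lemma c12: "word_mat 3 M12 N [S 1, S 2] = word_mat 3 M12 N [S 2, S 1]"
  unfolding word_mat_def M12_def by (simp add: loc1 loc2 one4 mult4)

theorem theorem4p5:
  fixes n :: nat and M N :: "complex mat"
  assumes "n \<ge> 4"
    and "hom3_rep n M N"
  shows "((\<exists>h p. h \<noteq> 0 \<and> p \<noteq> 0 \<and> rep_equiv n M N (M1 1 h) (N1 p)) \<longrightarrow> unfaithful n M N)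
       \<and> ((\<exists>d k. d \<noteq> 0 \<and> k \<noteq> 0 \<and> rep_equiv n M N (M2 1 d) (N2 k)) \<longrightarrow> unfaithful n M N)
       \<and> ((\<exists>p. p \<noteq> 0 \<and> rep_equiv n M N (M3 (1/p) p) (N3 p)) \<longrightarrow> unfaithful n M N)
       \<and> ((\<exists>k. k \<noteq> 0 \<and> rep_equiv n M N (M4 (1/k) k) (N4 k)) \<longrightarrow> unfaithful n M N)
       \<and> (delta_5_14 n M N \<longrightarrow> unfaithful n M N)"
proof (intro conjI impI)
  note n = assms(1)
  have g1: "([S 1], []) \<in> good" "([S 1], [R 1]) \<in> good" "([S 1, S 2], [S 2, S 1]) \<in> good"
    "(wp2a, wp2b) \<in> good" "(wp3a, wp3b) \<in> good" by (auto simp: good_def)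
  show "unfaithful n M N" if "\<exists>h p. h \<noteq> 0 \<and> p \<noteq> 0 \<and> rep_equiv n M N (M1 1 h) (N1 p)"
    using that key[OF _ n g1(4)] c1 by blast
  show "unfaithful n M N" if "\<exists>d k. d \<noteq> 0 \<and> k \<noteq> 0 \<and> rep_equiv n M N (M2 1 d) (N2 k)"
    using that key[OF _ n g1(5)] c2 by blast
  show "unfaithful n M N" if "\<exists>p. p \<noteq> 0 \<and> rep_equiv n M N (M3 (1/p) p) (N3 p)"
    using that key[OF _ n g1(2)] c3 by blast
  show "unfaithful n M N" if "\<exists>k. k \<noteq> 0 \<and> rep_equiv n M N (M4 (1/k) k) (N4 k)"
    using that key[OF _ n g1(2)] c4 by blast
  show "unfaithful n M N" if "delta_5_14 n M N"
    using that unfolding delta_5_14_def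
  proof (elim disjE exE conjE)
    fix b k assume "k \<noteq> 0" "rep_equiv n M N (M5 b) (N2 k)"
    then show ?thesis using key[OF _ n g1(4)] c5 by blast
  next
    fix b k assume "k \<noteq> 0" "rep_equiv n M N (M6 b) (N2 k)"
    then show ?thesis using key[OF _ n g1(5)] c6 by blast
  next
    fix p assume "rep_equiv n M N I3 (N3 p)"
    then show ?thesis using key[OF _ n g1(1)] cI by blast
  next
    fix k assume "rep_equiv n M N I3 (N4 k)"
    then show ?thesis using key[OF _ n g1(1)] cI by blast
  next
    fix p assume "rep_equiv n M N M9 (N1 p)"
    then show ?thesis using key[OF _ n g1(3)] c9 by blast
  next
    fix p assume "rep_equiv n M N M10 (N1 p)"
    then show ?thesis using key[OF _ n g1(3)] c10 by blast
  next
    fix p assume "rep_equiv n M N I3 (N1 p)"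
    then show ?thesis using key[OF _ n g1(1)] cI by blast
  next
    fix k assume "rep_equiv n M N M12 (N2 k)"
    then show ?thesis using key[OF _ n g1(3)] c12 by blast
  next
    fix k assume "rep_equiv n M N I3 (N2 k)"
    then show ?thesis using key[OF _ n g1(1)] cI by blast
  next
    assume "rep_equiv n M N I3 I3"
    then show ?thesis using key[OF _ n g1(1)] cI by blast
  qed
qed

end
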